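(* (1) For integers $n\ge0$, $0\le l<q^n$ and arbitrary $k\ge0$, $$\sum_{m\in\mathbf{F}_q[T],\ \deg m<n}D_k(m)D'_l(m)=\begin{cases}0&\text{if }k+l\neq q^n-1,\\(-1)^n&\text{if }k+l=q^n-1,\end{cases}$$ the sum running over all polynomials of degree $<n$ (including $0$). (2) For $0\le l<q^n$ and $0\le k<q^n$, $$\sum_{m\ \text{monic},\ \deg m=n}D_k(m)D'_l(m)=\begin{cases}0&\text{if }k+l\neq q^n-1,\\(-1)^n&\text{if }k+l=q^n-1.\end{cases}$$
   Context: Let $q$ be a prime power and $\mathbf{F}_q[T]\subset O=\mathbf{F}_q[[T]]$. Hasse derivatives: $\mathcal{D}_n(\sum_ia_iT^i)=\sum_i\binom{i}{n}a_iT^{i-n}$ (binomial coefficients read in $\mathbf{F}_q$). For $j\ge0$ with base-$q$ expansion $j=\alpha_0+\alpha_1q+\cdots+\alpha_sq^s$ ($0\le\alpha_i<q$): $D_j(x)=\prod_{n=0}^s\mathcal{D}_n(x)^{\alpha_n}$ ($D_0=1$), and $D'_j(x)=\prod_{n=0}^sD'_{\alpha_nq^n}(x)$ where $D'_{\alpha q^n}(x)=\mathcal{D}_n(x)^\alpha$ if $0\le\alpha<q-1$ and $D'_{(q-1)q^n}(x)=\mathcal{D}_n(x)^{q-1}-1$. *)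

theory Defs
  imports "HOL-Computational_Algebra.Polynomial" "HOL-Library.Cardinality"
begin

text \<open>F_q is modeled by a finite field type 'a, q = CARD('a); F_q[T] is 'a poly.\<close>

definition hasse :: "nat \<Rightarrow> 'a::{finite,field} poly \<Rightarrow> 'a poly" where
  "hasse n p = (\<Sum>i\<le>degree p. monom (of_nat (i choose n) * coeff p i) (i - n))"

definition qdigit :: "nat \<Rightarrow> nat \<Rightarrow> nat \<Rightarrow> nat" where
  "qdigit q j n = (j div q ^ n) mod q"

text \<open>Digits with index n > j are zero, so the product over n \<le> j covers all digits.\<close>
definition Dk :: "nat \<Rightarrow> 'a::{finite,field} poly \<Rightarrow> 'a poly" where
  "Dk j x = (\<Prod>n\<le>j. hasse n x ^ qdigit CARD('a) j n)"

definition Dp :: "nat \<Rightarrow> 'a::{finite,field} poly \<Rightarrow> 'a poly" where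
  "Dp j x = (\<Prod>n\<le>j. if qdigit CARD('a) j n = CARD('a) - 1
                        then hasse n x ^ (CARD('a) - 1) - 1
                        else hasse n x ^ qdigit CARD('a) j n)"

end

theory Submission
  imports Defs
begin


lemma card_ge2: "CARD('a::{finite,field}) \<ge> 2"
proof -
  have "card {0::'a, 1} = 2" by simp
  moreover have "card {0::'a, 1} \<le> CARD('a)" by (rule card_mono) auto
  ultimately show ?thesis by simp
qed

lemma of_nat_card0: "(of_nat CARD('a::{finite,field}) :: 'a) = 0"
proof -
  have "(\<Sum>a\<in>(UNIV::'a set). a + 1) = (\<Sum>a\<in>UNIV. a)"
    by (rule sum.reindex_bij_witness[of _ "\<lambda>a. a - 1" "\<lambda>a. a + 1"]) auto
  then show ?thesis by (simp add: sum.distrib)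
qed

lemma pow_card_minus1:
  fixes x :: "'a::{finite,field}"
  assumes "x \<noteq> 0"
  shows "x ^ (CARD('a) - 1) = 1"
proof -
  have "x * (\<Prod>y\<in>UNIV-{0}. x * y) = x * x ^ (CARD('a) - 1) * \<Prod>(UNIV-{0})"
    by (simp add: prod.distrib mult_ac)
  also have "(\<Prod>y\<in>UNIV-{0}. x * y) = (\<Prod>y\<in>UNIV-{0}. y)"
    by (rule prod.reindex_bij_witness[of _ "\<lambda>y. y / x" "\<lambda>y. x * y"]) (use assms in auto)
  finally have "x * \<Prod>(UNIV-{0}) = x * x ^ (CARD('a) - 1) * \<Prod>(UNIV-{0::'a})" .
  moreover have "\<Prod>(UNIV-{0::'a}) \<noteq> 0" by (subst prod_zero_iff) auto
  ultimately show ?thesis using assms by simp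
qed

lemma pow_card_minus1':
  fixes x :: "'a::{finite,field}"
  assumes "x \<noteq> 0"
  shows "x ^ (CARD('a) - Suc 0) = 1"
  using pow_card_minus1[OF assms] by simp

definition psum :: "nat \<Rightarrow> 'a::{finite,field}" where
  "psum e = (\<Sum>a\<in>UNIV. a ^ e)"

lemma psum_0: "psum 0 = (0::'a::{finite,field})"
  using of_nat_card0[where 'a='a] by (simp add: psum_def)

lemma psum_qm1: "psum (CARD('a) - 1) = (-1::'a::{finite,field})"
proof -
  have "psum (CARD('a) - 1) = (\<Sum>a\<in>UNIV-{0::'a}. a ^ (CARD('a) - 1)) + (0::'a) ^ (CARD('a) - 1)"
    unfolding psum_def by (subst sum.remove[of _ 0]) (auto simp: add.commute)
  also have "(0::'a) ^ (CARD('a) - 1) = 0" using card_ge2[where 'a='a] by simp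
  also have "(\<Sum>a\<in>UNIV-{0::'a}. a ^ (CARD('a) - 1)) = (\<Sum>a\<in>UNIV-{0::'a}. 1)"
    by (rule sum.cong) (auto simp: pow_card_minus1')
  also have "\<dots> = of_nat (CARD('a) - 1)" by (simp add: card_Diff_singleton)
  also have "\<dots> = of_nat CARD('a) - 1" using card_ge2[where 'a='a] by (simp add: of_nat_diff)
  finally show ?thesis by (simp add: of_nat_card0)
qed

lemma psum_qm1': "psum (CARD('a) - Suc 0) = (-1::'a::{finite,field})"
  using psum_qm1[where 'a='a] by simp

lemma psum_small:
  assumes "0 < e" "e < CARD('a) - 1"
  shows "psum e = (0::'a::{finite,field})"
proof -
  let ?p = "monom (1::'a) e - 1"
  have p0: "?p \<noteq> 0"
  proof
    assume "?p = 0"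
    then have "coeff ?p e = 0" by simp
    then show False using assms by simp
  qed
  have dp: "degree ?p \<le> e"
    by (rule degree_diff_le) (auto simp: degree_monom_le)
  have "card {x. poly ?p x = 0} \<le> e" using card_poly_roots_bound[OF p0] dp by linarith
  moreover have "card (UNIV - {0::'a}) = CARD('a) - 1" by (simp add: card_Diff_singleton)
  ultimately have "\<not> (UNIV - {0::'a}) \<subseteq> {x. poly ?p x = 0}"
    using assms by (metis card_mono finite le_trans not_le)
  then obtain c :: 'a where c: "c \<noteq> 0" "poly ?p c \<noteq> 0" by auto
  then have c1: "c ^ e \<noteq> 1" by (simp add: poly_monom)
  have "psum e = (\<Sum>a\<in>UNIV. (c * a) ^ e)"
    unfolding psum_def
    by (rule sum.reindex_bij_witness[of _ "\<lambda>y. c * y" "\<lambda>y. y / c"]) (use c in auto)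
  also have "\<dots> = c ^ e * psum e" by (simp add: psum_def power_mult_distrib sum_distrib_left)
  finally have "(c ^ e - 1) * psum e = 0" by (simp add: algebra_simps)
  then show ?thesis using c1 by simp
qed

lemma psum_big:
  assumes "CARD('a) - 1 < e"
  shows "psum e = (psum (e - (CARD('a) - 1)) :: 'a::{finite,field})"
  unfolding psum_def
proof (rule sum.cong)
  fix x :: 'a
  show "x ^ e = x ^ (e - (CARD('a) - 1))"
  proof (cases "x = 0")
    case True then show ?thesis using assms card_ge2[where 'a='a] by (simp add: power_0_left)
  next
    case False
    have "x ^ e = x ^ (CARD('a) - 1) * x ^ (e - (CARD('a) - 1))"
      using assms by (simp flip: power_add)
    then show ?thesis using False by (simp add: pow_card_minus1')
  qed
qed simp

lemma psum_val:
  assumes "e \<le> 2 * CARD('a) - 2"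
  shows "psum e = (if e = CARD('a) - 1 \<or> e = 2 * CARD('a) - 2 then -1 else (0::'a::{finite,field}))"
proof -
  have q2: "CARD('a) \<ge> 2" by (rule card_ge2)
  consider "e = 0" | "0 < e \<and> e < CARD('a) - 1" | "e = CARD('a) - 1" | "CARD('a) - 1 < e" by linarith
  then show ?thesis
  proof cases
    case 1 then show ?thesis using q2 by (simp add: psum_0)
  next
    case 2
    then have "e \<noteq> 2 * CARD('a) - 2" by linarith
    then show ?thesis using 2 by (simp add: psum_small)
  next
    case 3 then show ?thesis using q2 by (simp add: psum_qm1')
  next
    case 4
    then have ps: "psum e = (psum (e - (CARD('a) - 1)) :: 'a)" by (rule psum_big)
    show ?thesis
    proof (cases "e = 2 * CARD('a) - 2")
      case True
      then have "e - (CARD('a) - 1) = CARD('a) - 1" using q2 by simp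
      then show ?thesis using ps True by (simp add: psum_qm1')
    next
      case False
      then have "0 < e - (CARD('a) - 1)" "e - (CARD('a) - 1) < CARD('a) - 1" using 4 assms by auto
      then show ?thesis using ps False 4 by (simp add: psum_small)
    qed
  qed
qed



lemma pcompose_power': "pcompose (p ^ n) r = (pcompose p r) ^ n"
  by (induction n) (simp_all add: pcompose_mult pcompose_1)

lemma Q_expand:
  fixes e :: nat
  shows "(\<Sum>a\<in>(UNIV::'a::{finite,field} set). [:a, 1:] ^ e) =
         (\<Sum>i\<le>e. monom (of_nat (e choose i) * psum i) (e - i))"
proof -
  have "(\<Sum>a\<in>(UNIV::'a set). [:a, 1:] ^ e) =
        (\<Sum>a\<in>(UNIV::'a set). \<Sum>i\<le>e. of_nat (e choose i) * [:a:] ^ i * [:0,1:] ^ (e - i))"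
  proof (rule sum.cong)
    fix a :: 'a
    have "[:a, 1:] = [:a:] + [:0,1:]" by simp
    then show "[:a, 1:] ^ e = (\<Sum>i\<le>e. of_nat (e choose i) * [:a:] ^ i * [:0,1:] ^ (e - i))"
      by (simp only: binomial_ring)
  qed simp
  also have "\<dots> = (\<Sum>i\<le>e. \<Sum>a\<in>(UNIV::'a set). of_nat (e choose i) * [:a:] ^ i * [:0,1:] ^ (e - i))"
    by (rule sum.swap)
  also have "\<dots> = (\<Sum>i\<le>e. monom (of_nat (e choose i) * psum i) (e - i))"
  proof (rule sum.cong)
    fix i assume "i \<in> {..e}"
    have "(\<Sum>a\<in>(UNIV::'a set). of_nat (e choose i) * [:a:] ^ i * [:0,1:] ^ (e - i))
        = of_nat (e choose i) * [:psum i:] * [:0,1:] ^ (e - i)"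
      by (simp add: psum_def poly_const_pow smult_sum sum_distrib_right)
    then show "(\<Sum>a\<in>(UNIV::'a set). of_nat (e choose i) * [:a:] ^ i * [:0,1:] ^ (e - i))
        = monom (of_nat (e choose i) * psum i) (e - i)"
      by (simp add: monom_altdef of_nat_poly mult.commute)
  qed simp
  finally show ?thesis .
qed



lemma psum_lt: "i < CARD('a) - 1 \<Longrightarrow> psum i = (0::'a::{finite,field})"
  using psum_val[of i, where 'a='a] card_ge2[where 'a='a] by auto

lemma Q_const:
  assumes e: "e \<le> 2 * CARD('a) - 2"
  shows "(\<Sum>a\<in>(UNIV::'a::{finite,field} set). [:a, 1:] ^ e) = [:psum e:]"
proof -
  define Q where "Q = (\<Sum>a\<in>(UNIV::'a set). [:a, 1:] ^ e)"
  have q2: "CARD('a) \<ge> 2" by (rule card_ge2)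
  have degQ: "degree Q \<le> CARD('a) - 1"
  proof (rule degree_le, intro allI impI)
    fix j assume j: "CARD('a) - 1 < j"
    have "coeff Q j = (\<Sum>i\<le>e. coeff (monom (of_nat (e choose i) * psum i) (e - i)) j)"
      unfolding Q_def Q_expand by (simp add: coeff_sum)
    also have "\<dots> = 0"
    proof (rule sum.neutral, rule ballI)
      fix i assume "i \<in> {..e}"
      show "coeff (monom (of_nat (e choose i) * psum i) (e - i)) j = (0::'a)"
      proof (cases "e - i = j")
        case True
        then have "i < CARD('a) - 1" using j e q2 by linarith
        then show ?thesis by (simp add: psum_lt)
      qed simp
    qed
    finally show "coeff Q j = 0" .
  qed
  have ev: "poly Q c = psum e" for c :: 'a
  proof -
    have "poly Q c = (\<Sum>a\<in>(UNIV::'a set). (a + c) ^ e)"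
      unfolding Q_def by (simp add: poly_sum)
    also have "\<dots> = psum e" unfolding psum_def
      by (rule sum.reindex_bij_witness[of _ "\<lambda>a. a - c" "\<lambda>a. a + c"]) auto
    finally show ?thesis .
  qed
  define R where "R = Q - [:psum e:]"
  have "R = 0"
  proof (rule ccontr)
    assume R0: "R \<noteq> 0"
    have "{x. poly R x = 0} = UNIV" using ev by (auto simp: R_def)
    then have "CARD('a) \<le> degree R" using card_poly_roots_bound[OF R0] by simp
    moreover have "degree R \<le> CARD('a) - 1"
      unfolding R_def by (rule degree_diff_le) (use degQ in auto)
    ultimately show False using q2 by linarith
  qed
  then show ?thesis unfolding R_def Q_def by simp
qed

lemma shift_power_sum:
  assumes e: "e \<le> 2 * CARD('a) - 2"
  shows "(\<Sum>a\<in>(UNIV::'a::{finite,field} set). ([:a:] + x) ^ e) = [:psum e:]"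
proof -
  have "pcompose (\<Sum>a\<in>(UNIV::'a set). [:a, 1:] ^ e) x = (\<Sum>a\<in>(UNIV::'a set). ([:a:] + x) ^ e)"
    by (simp add: pcompose_sum pcompose_power' pcompose_pCons)
  then show ?thesis using Q_const[OF e] by simp
qed



lemma const_m1: "[:-1:] = (-1::'a::comm_ring_1 poly)"
  by (simp add: one_pCons)

definition Gf :: "nat \<Rightarrow> 'a::{finite,field} poly \<Rightarrow> 'a poly" where
  "Gf \<beta> b = (if \<beta> = CARD('a) - 1 then b ^ (CARD('a) - 1) - 1 else b ^ \<beta>)"

definition Hf :: "nat \<Rightarrow> nat \<Rightarrow> 'a::{finite,field} poly \<Rightarrow> 'a poly" where
  "Hf \<alpha> \<beta> b = b ^ \<alpha> * Gf \<beta> b"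

lemma Hf_sum:
  assumes "\<alpha> < CARD('a)" "\<beta> < CARD('a)"
  shows "(\<Sum>a\<in>(UNIV::'a::{finite,field} set). Hf \<alpha> \<beta> ([:a:] + x)) =
         (if \<alpha> + \<beta> = CARD('a) - 1 then -1 else 0)"
proof -
  have q2: "CARD('a) \<ge> 2" by (rule card_ge2)
  show ?thesis
  proof (cases "\<beta> = CARD('a) - 1")
    case False
    have "(\<Sum>a\<in>(UNIV::'a set). Hf \<alpha> \<beta> ([:a:] + x)) = (\<Sum>a\<in>(UNIV::'a set). ([:a:] + x) ^ (\<alpha> + \<beta>))"
      using False by (simp add: Hf_def Gf_def power_add)
    also have "\<dots> = [:psum (\<alpha> + \<beta>):]"
      by (rule shift_power_sum) (use assms in linarith)
    also have "\<dots> = (if \<alpha> + \<beta> = CARD('a) - 1 then -1 else 0)"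
      using assms False q2 by (subst psum_val) (auto simp: const_m1)
    finally show ?thesis .
  next
    case True
    have "(\<Sum>a\<in>(UNIV::'a set). Hf \<alpha> \<beta> ([:a:] + x)) =
          (\<Sum>a\<in>(UNIV::'a set). ([:a:] + x) ^ (\<alpha> + (CARD('a) - 1))) - (\<Sum>a\<in>(UNIV::'a set). ([:a:] + x) ^ \<alpha>)"
    proof -
      have "Hf \<alpha> \<beta> b = b ^ (\<alpha> + (CARD('a) - 1)) - b ^ \<alpha>" for b :: "'a poly"
        unfolding Hf_def Gf_def using True by (simp only: if_True refl power_add right_diff_distrib mult_1_right)
      then show ?thesis by (simp only: sum_subtractf)
    qed
    also have "\<dots> = [:psum (\<alpha> + (CARD('a) - 1)):] - [:psum \<alpha>:]"
      using assms by (subst shift_power_sum, linarith)+ simp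
    also have "\<dots> = (if \<alpha> + \<beta> = CARD('a) - 1 then -1 else 0)"
      using assms True q2 by (subst psum_val, linarith)+ (auto simp: psum_0 const_m1)
    finally show ?thesis .
  qed
qed



lemma coeff_hasse: "coeff (hasse n p) k = of_nat ((k + n) choose n) * coeff p (k + n)"
proof -
  have "coeff (hasse n p) k = (\<Sum>i\<le>degree p. coeff (monom (of_nat (i choose n) * coeff p i) (i - n)) k)"
    unfolding hasse_def by (simp add: coeff_sum)
  also have "\<dots> = (\<Sum>i\<le>degree p. if i = k + n then of_nat ((k + n) choose n) * coeff p (k + n) else 0)"
  proof (rule sum.cong)
    fix i assume "i \<in> {..degree p}"
    show "coeff (monom (of_nat (i choose n) * coeff p i) (i - n)) k =
          (if i = k + n then of_nat ((k + n) choose n) * coeff p (k + n) else 0)"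
    proof (cases "i < n")
      case True then show ?thesis by (auto simp: binomial_eq_0)
    next
      case False then show ?thesis by auto
    qed
  qed simp
  also have "\<dots> = of_nat ((k + n) choose n) * coeff p (k + n)"
    by (cases "k + n \<le> degree p") (auto simp: coeff_eq_0)
  finally show ?thesis .
qed

lemma hasse_add: "hasse n (p + q) = hasse n p + hasse n q"
  by (simp add: poly_eq_iff coeff_hasse algebra_simps)

lemma hasse_small: "p = 0 \<or> degree p < n \<Longrightarrow> hasse n p = 0"
  by (auto simp: poly_eq_iff coeff_hasse coeff_eq_0)

lemma hasse_monom: "hasse n (monom a n) = [:a:]"
  by (auto simp: poly_eq_iff coeff_hasse coeff_pCons')



definition Pn :: "nat \<Rightarrow> 'a::zero poly set" where
  "Pn n = {m. m = 0 \<or> degree m < n}"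

lemma Pn_coeff: "r \<in> Pn n \<Longrightarrow> coeff r n = 0"
  by (auto simp: Pn_def coeff_eq_0)

lemma deg_le_coeff0: "degree (p::'a::zero poly) \<le> n \<Longrightarrow> coeff p n = 0 \<Longrightarrow> p \<in> Pn n"
  using leading_coeff_0_iff[of p] by (cases "degree p = n") (auto simp: Pn_def)

lemma Pn_Suc_sum:
  "(\<Sum>m\<in>Pn (Suc n). f m) = (\<Sum>a\<in>(UNIV::'a::{finite,field} set). \<Sum>r\<in>Pn n. f (monom a n + r))"
proof -
  have "(\<Sum>a\<in>(UNIV::'a set). \<Sum>r\<in>Pn n. f (monom a n + r)) =
        (\<Sum>(a, r)\<in>UNIV \<times> Pn n. f (monom a n + r))"
    by (rule sum.cartesian_product)
  also have "\<dots> = (\<Sum>m\<in>Pn (Suc n). f m)"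
  proof (rule sum.reindex_bij_witness[of _ "\<lambda>m. (coeff m n, m - monom (coeff m n) n)"
                                            "\<lambda>(a, r). monom a n + r"])
    fix x :: "'a \<times> 'a poly" assume x: "x \<in> UNIV \<times> Pn n"
    obtain a r where ar: "x = (a, r)" by force
    with x have r: "r \<in> Pn n" by auto
    show "(coeff ((case x of (a, r) \<Rightarrow> monom a n + r)) n,
           (case x of (a, r) \<Rightarrow> monom a n + r) - monom (coeff ((case x of (a, r) \<Rightarrow> monom a n + r)) n) n) = x"
      using ar Pn_coeff[OF r] by simp
    have "degree (monom a n + r) \<le> n"
      using r by (intro degree_add_le) (auto simp: Pn_def degree_monom_le)
    then show "(case x of (a, r) \<Rightarrow> monom a n + r) \<in> Pn (Suc n)"
      using ar by (auto simp: Pn_def)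
    show "f (case x of (a, r) \<Rightarrow> monom a n + r) = (case x of (a, r) \<Rightarrow> f (monom a n + r))"
      using ar by simp
  next
    fix m :: "'a poly" assume m: "m \<in> Pn (Suc n)"
    show "(case (coeff m n, m - monom (coeff m n) n) of (a, r) \<Rightarrow> monom a n + r) = m" by simp
    have "degree m \<le> n" using m by (auto simp: Pn_def)
    then have "degree (m - monom (coeff m n) n) \<le> n"
      by (intro degree_diff_le) (auto simp: degree_monom_le)
    then have "m - monom (coeff m n) n \<in> Pn n"
      by (rule deg_le_coeff0) simp
    then show "(coeff m n, m - monom (coeff m n) n) \<in> UNIV \<times> Pn n" by simp
  qed
  finally show ?thesis ..
qed

lemma main_prod:
  fixes Hj :: "nat \<Rightarrow> 'a::{finite,field} poly \<Rightarrow> 'a poly"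
  assumes "\<And>j x. (\<Sum>a\<in>(UNIV::'a set). Hj j ([:a:] + x)) = S j"
  shows "(\<Sum>r\<in>Pn n. \<Prod>j<n. Hj j (hasse j (c + r))) = (\<Prod>j<n. S j)"
proof (induction n arbitrary: c)
  case 0
  have "Pn 0 = {0::'a poly}" by (auto simp: Pn_def)
  then show ?case by simp
next
  case (Suc n)
  have "(\<Sum>r\<in>Pn (Suc n). \<Prod>j<Suc n. Hj j (hasse j (c + r))) =
        (\<Sum>a\<in>(UNIV::'a set). \<Sum>r\<in>Pn n. \<Prod>j<Suc n. Hj j (hasse j (c + (monom a n + r))))"
    by (rule Pn_Suc_sum)
  also have "\<dots> = (\<Sum>a\<in>(UNIV::'a set). Hj n ([:a:] + hasse n c) *
                     (\<Sum>r\<in>Pn n. \<Prod>j<n. Hj j (hasse j ((c + monom a n) + r))))"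
  proof (rule sum.cong[OF refl])
    fix a :: 'a
    show "(\<Sum>r\<in>Pn n. \<Prod>j<Suc n. Hj j (hasse j (c + (monom a n + r)))) =
          Hj n ([:a:] + hasse n c) * (\<Sum>r\<in>Pn n. \<Prod>j<n. Hj j (hasse j ((c + monom a n) + r)))"
      unfolding sum_distrib_left
    proof (rule sum.cong[OF refl])
      fix r :: "'a poly" assume r: "r \<in> Pn n"
      have "hasse n (c + (monom a n + r)) = [:a:] + hasse n c"
        using hasse_small[of r n] r by (simp add: hasse_add hasse_monom Pn_def)
      then show "(\<Prod>j<Suc n. Hj j (hasse j (c + (monom a n + r)))) =
                 Hj n ([:a:] + hasse n c) * (\<Prod>j<n. Hj j (hasse j ((c + monom a n) + r)))"
        by (simp only: prod.lessThan_Suc add.assoc mult.commute)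
    qed
  qed
  also have "\<dots> = (\<Sum>a\<in>(UNIV::'a set). Hj n ([:a:] + hasse n c)) * (\<Prod>j<n. S j)"
    by (simp only: Suc.IH sum_distrib_right)
  also have "\<dots> = (\<Prod>j<Suc n. S j)"
    by (simp only: assms prod.lessThan_Suc mult.commute)
  finally show ?case .
qed



lemma qdigit_0: "qdigit q k 0 = k mod q"
  by (simp add: qdigit_def)

lemma qdigit_Suc: "qdigit q k (Suc j) = qdigit q (k div q) j"
  by (simp add: qdigit_def div_mult2_eq mult.commute)

lemma qdigit_small: "k < q ^ j \<Longrightarrow> qdigit q k j = 0"
  by (simp add: qdigit_def)

lemma qdigit_lt: "q > 0 \<Longrightarrow> qdigit q k j < q"
  by (simp add: qdigit_def)

lemma lt_pow: "(q::nat) \<ge> 2 \<Longrightarrow> j < q ^ j"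
proof -
  assume "q \<ge> 2"
  then have "2 ^ j \<le> q ^ j" by (simp add: power_mono)
  moreover have "j < 2 ^ j" by (rule less_exp)
  ultimately show ?thesis by linarith
qed

lemma digit_step:
  fixes q k l n :: nat
  assumes q: "q \<ge> 2" and k: "k < q * q ^ n" and l: "l < q * q ^ n"
  shows "(k + l = q * q ^ n - 1) \<longleftrightarrow>
         (k mod q + l mod q = q - 1 \<and> k div q + l div q = q ^ n - 1)"
proof -
  have kd: "k = k mod q + q * (k div q)" by simp
  have ld: "l = l mod q + q * (l div q)" by simp
  have km: "k mod q < q" "l mod q < q" using q by auto
  have pos: "q ^ n \<ge> 1" using q by simp
  show ?thesis
  proof
    assume h: "k + l = q * q ^ n - 1"
    define s where "s = k mod q + l mod q + 1"
    define t where "t = k div q + l div q"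
    have e: "s + q * t = q * q ^ n"
      using h kd ld pos q unfolding s_def t_def
      by (metis (no_types, lifting) add.assoc add.commute add.left_commute distrib_left
          Suc_eq_plus1 Suc_pred' less_le_trans mult_pos_pos zero_less_one pos le_numeral_extra(2) zero_less_numeral)
    then have "s = q * q ^ n - q * t" by linarith
    then have "s = q * (q ^ n - t)" by (simp add: diff_mult_distrib2)
    then have "q dvd s" by simp
    moreover have "0 < s" "s < 2 * q" using km unfolding s_def by linarith+
    ultimately have sq: "s = q" by (auto elim!: dvdE simp: mult_less_cancel1)
    then have "q * (t + 1) = q * q ^ n" using e by (simp add: algebra_simps)
    moreover have "q \<noteq> 0" using q by simp
    ultimately have "t + 1 = q ^ n" using mult_left_cancel by blast
    then show "k mod q + l mod q = q - 1 \<and> k div q + l div q = q ^ n - 1"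
      using sq unfolding s_def t_def by auto
  next
    assume h: "k mod q + l mod q = q - 1 \<and> k div q + l div q = q ^ n - 1"
    have "k + l = (k mod q + l mod q) + q * (k div q + l div q)"
      using kd ld by (simp add: algebra_simps)
    also have "\<dots> = (q - 1) + q * (q ^ n - 1)" using h by simp
    also have "\<dots> = q * q ^ n - 1" using pos q by (simp add: algebra_simps diff_mult_distrib2)
    finally show "k + l = q * q ^ n - 1" .
  qed
qed

lemma digits_sum:
  fixes q :: nat
  assumes q: "q \<ge> 2"
  shows "k < q ^ n \<Longrightarrow> l < q ^ n \<Longrightarrow>
         (k + l = q ^ n - 1) \<longleftrightarrow> (\<forall>j<n. qdigit q k j + qdigit q l j = q - 1)"
proof (induction n arbitrary: k l)
  case 0 then show ?case by simp
next
  case (Suc n)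
  have kd: "k div q < q ^ n" "l div q < q ^ n" using Suc.prems q
    by (simp_all add: less_mult_imp_div_less mult.commute)
  have "(k + l = q ^ Suc n - 1) \<longleftrightarrow>
         (k mod q + l mod q = q - 1 \<and> k div q + l div q = q ^ n - 1)"
    using digit_step[OF q] Suc.prems by simp
  also have "\<dots> \<longleftrightarrow> (qdigit q k 0 + qdigit q l 0 = q - 1 \<and>
                     (\<forall>j<n. qdigit q k (Suc j) + qdigit q l (Suc j) = q - 1))"
    using Suc.IH[OF kd] by (simp add: qdigit_0 qdigit_Suc)
  also have "\<dots> \<longleftrightarrow> (\<forall>j<Suc n. qdigit q k j + qdigit q l j = q - 1)"
    by (auto simp: less_Suc_eq_0_disj)
  finally show ?case .
qed

lemma big_digit:
  fixes q :: nat
  assumes q: "q \<ge> 2"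
  shows "q ^ n \<le> k \<Longrightarrow> \<exists>j. n \<le> j \<and> j \<le> k \<and> qdigit q k j \<noteq> 0"
proof (induction k arbitrary: n rule: less_induct)
  case (less k)
  show ?case
  proof (cases "n = 0 \<and> k mod q \<noteq> 0")
    case True then show ?thesis by (intro exI[of _ 0]) (simp add: qdigit_0)
  next
    case False
    have k1: "k \<ge> 1" using less.prems q by (metis less_one not_le one_le_power order_less_le_trans zero_less_numeral le_trans order.order_iff_strict)
    have kk: "k div q < k" using k1 q by simp
    have "q ^ (n - 1) \<le> k div q"
    proof (cases "n = 0")
      case True
      then have "k mod q = 0" using False by simp
      then have "k = q * (k div q)" using mult_div_mod_eq[of q k] by simp
      then have "k div q \<noteq> 0" using k1 by (metis mult_0_right not_one_le_zero)
      then show ?thesis using True by simp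
    next
      case False
      then have "q * q ^ (n - 1) \<le> k" using less.prems by (metis power_Suc Suc_pred' neq0_conv)
      then show ?thesis using q by (metis div_le_mono div_mult_self1_is_m zero_less_numeral less_le_trans mult.commute zero_less_two)
    qed
    from less.IH[OF kk this] obtain j where j: "n - 1 \<le> j" "j \<le> k div q" "qdigit q (k div q) j \<noteq> 0" by blast
    have "Suc j \<le> k"
    proof -
      have "j < q ^ j" using q by (rule lt_pow)
      have "q ^ j \<le> k div q" using j(3) by (auto simp: qdigit_def intro: ccontr)
      then have "q * q ^ j \<le> k" using q by (metis div_le_mono2 less_eq_div_iff_mult_less_eq mult.commute le_trans zero_less_numeral less_le_trans zero_less_two le_refl le_div_geq) 
      then show ?thesis using \<open>j < q ^ j\<close> q by (metis Suc_leI le_trans mult_le_mono1 nat_mult_1 less_le_trans one_le_numeral) 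
    qed
    then show ?thesis using j by (intro exI[of _ "Suc j"]) (auto simp: qdigit_Suc)
  qed
qed



lemma prod_eq_restrict:
  assumes "finite A" "finite B" "\<And>j. j \<in> A \<union> B \<Longrightarrow> j \<notin> A \<inter> B \<Longrightarrow> f j = 1"
  shows "prod f A = prod f B"
proof -
  have "prod f A = prod f (A \<inter> B)"
    by (rule prod.mono_neutral_right) (use assms in auto)
  also have "\<dots> = prod f B"
    by (rule prod.mono_neutral_left) (use assms in auto)
  finally show ?thesis .
qed

lemma Dk_Dp_prod:
  fixes m :: "'a::{finite,field} poly"
  assumes k: "k < CARD('a) ^ n" and l: "l < CARD('a) ^ n"
  shows "Dk k m * Dp l m = (\<Prod>j<n. Hf (qdigit CARD('a) k j) (qdigit CARD('a) l j) (hasse j m))"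
proof -
  have q2: "CARD('a) \<ge> 2" by (rule card_ge2)
  have zk: "qdigit CARD('a) x j = 0" if "x < CARD('a) ^ n" "j \<notin> {..<n} \<inter> {..x}" for x j
  proof (rule qdigit_small)
    show "x < CARD('a) ^ j"
    proof (cases "n \<le> j")
      case True
      then have "CARD('a) ^ n \<le> CARD('a) ^ j" using q2 by (simp add: power_increasing)
      then show ?thesis using that by linarith
    next
      case False
      then have "x < j" using that by auto
      then show ?thesis using lt_pow[OF q2, of j] by linarith
    qed
  qed
  have "Dk k m = (\<Prod>j<n. hasse j m ^ qdigit CARD('a) k j)"
    unfolding Dk_def by (rule prod_eq_restrict) (use zk[OF k] in auto)
  moreover have "Dp l m = (\<Prod>j<n. Gf (qdigit CARD('a) l j) (hasse j m))"
    unfolding Dp_def Gf_def by (rule prod_eq_restrict) (use zk[OF l] q2 in auto)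
  ultimately show ?thesis by (simp add: Hf_def prod.distrib)
qed

lemma prod_if_m1:
  "(\<Prod>j<n. (if P j then -1 else 0 :: 'b::comm_ring_1)) = (if \<forall>j<n. P j then (-1) ^ n else 0)"
proof (cases "\<forall>j<n. P j")
  case True
  then have "(\<Prod>j<n. (if P j then -1 else 0 :: 'b)) = (\<Prod>j<n. -1)" by (intro prod.cong) auto
  then show ?thesis using True by simp
next
  case False
  then obtain j where "j < n" "\<not> P j" by auto
  then have "(\<Prod>j<n. (if P j then -1 else 0 :: 'b)) = 0" by (intro prod_zero) auto
  then show ?thesis by (subst if_not_P[OF False])
qed

lemma sum_Hf:
  fixes c :: "'a::{finite,field} poly"
  shows "(\<Sum>r\<in>Pn n. \<Prod>j<n. Hf (qdigit CARD('a) k j) (qdigit CARD('a) l j) (hasse j (c + r))) =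
         (if \<forall>j<n. qdigit CARD('a) k j + qdigit CARD('a) l j = CARD('a) - 1 then (-1) ^ n else 0)"
proof -
  have q2: "CARD('a) \<ge> 2" by (rule card_ge2)
  have "(\<Sum>r\<in>Pn n. \<Prod>j<n. Hf (qdigit CARD('a) k j) (qdigit CARD('a) l j) (hasse j (c + r))) =
        (\<Prod>j<n. (if qdigit CARD('a) k j + qdigit CARD('a) l j = CARD('a) - 1 then -1 else 0))"
    by (rule main_prod) (rule Hf_sum; use q2 qdigit_lt in auto)
  then show ?thesis by (simp add: prod_if_m1)
qed

theorem theorem9:
  fixes n k l :: nat
  assumes "l < CARD('a::{finite,field}) ^ n"
  shows "(\<Sum>m\<in>{m :: 'a poly. m = 0 \<or> degree m < n}. Dk k m * Dp l m) =
           (if k + l \<noteq> CARD('a) ^ n - 1 then 0 else (-1) ^ n)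
         \<and> (k < CARD('a) ^ n \<longrightarrow>
         (\<Sum>m\<in>{m :: 'a poly. lead_coeff m = 1 \<and> degree m = n}. Dk k m * Dp l m) =
           (if k + l \<noteq> CARD('a) ^ n - 1 then 0 else (-1) ^ n))"
proof -
  have q2: "CARD('a) \<ge> 2" by (rule card_ge2)
  have PnE: "{m :: 'a poly. m = 0 \<or> degree m < n} = Pn n" by (simp add: Pn_def)
  have small: "(\<Sum>r\<in>Pn n. Dk k (c + r) * Dp l (c + r)) =
           (if k + l \<noteq> CARD('a) ^ n - 1 then 0 else (-1) ^ n)"
    if k: "k < CARD('a) ^ n" for c :: "'a poly"
  proof -
    have "(\<Sum>r\<in>Pn n. Dk k (c + r) * Dp l (c + r)) =
          (\<Sum>r\<in>Pn n. \<Prod>j<n. Hf (qdigit CARD('a) k j) (qdigit CARD('a) l j) (hasse j (c + r)))"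
      by (rule sum.cong[OF refl]) (rule Dk_Dp_prod[OF k assms])
    also have "\<dots> = (if \<forall>j<n. qdigit CARD('a) k j + qdigit CARD('a) l j = CARD('a) - 1 then (-1) ^ n else 0)"
      by (rule sum_Hf)
    also have "\<dots> = (if k + l \<noteq> CARD('a) ^ n - 1 then 0 else (-1) ^ n)"
      using digits_sum[OF q2 k assms] by auto
    finally show ?thesis .
  qed
  have part1: "(\<Sum>m\<in>(Pn n :: 'a poly set). Dk k m * Dp l m) =
           (if k + l \<noteq> CARD('a) ^ n - 1 then 0 else (-1) ^ n)"
  proof (cases "k < CARD('a) ^ n")
    case True
    then show ?thesis using small[OF True, of 0] by (simp only: add_0_left)
  next
    case False
    then obtain j where j: "n \<le> j" "j \<le> k" "qdigit CARD('a) k j \<noteq> 0"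
      using big_digit[OF q2, of n k] by auto
    have "Dk k m * Dp l m = 0" if m: "m \<in> Pn n" for m :: "'a poly"
    proof -
      have "hasse j m = 0" using m j(1) by (intro hasse_small) (auto simp: Pn_def)
      then have "Dk k m = 0" unfolding Dk_def using j by (intro prod_zero) auto
      then show ?thesis by simp
    qed
    then have "(\<Sum>m\<in>(Pn n :: 'a poly set). Dk k m * Dp l m) = 0" by (intro sum.neutral) auto
    moreover have "CARD('a) ^ n > 0" using q2 by simp
    then have "k + l \<noteq> CARD('a) ^ n - 1" using False by linarith
    ultimately show ?thesis by simp
  qed
  have part2: "(\<Sum>m\<in>{m :: 'a poly. lead_coeff m = 1 \<and> degree m = n}. Dk k m * Dp l m) =
           (if k + l \<noteq> CARD('a) ^ n - 1 then 0 else (-1) ^ n)" if k: "k < CARD('a) ^ n"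
  proof -
    have "(\<Sum>r\<in>Pn n. Dk k (monom 1 n + r) * Dp l (monom 1 n + r)) =
          (\<Sum>m\<in>{m :: 'a poly. lead_coeff m = 1 \<and> degree m = n}. Dk k m * Dp l m)"
    proof (rule sum.reindex_bij_witness[of _ "\<lambda>m. m - monom 1 n" "\<lambda>r. monom 1 n + r"])
      fix r :: "'a poly" assume r: "r \<in> Pn n"
      show "monom 1 n + r - monom 1 n = r" by simp
      have c: "coeff (monom 1 n + r) n = 1" using Pn_coeff[OF r] by simp
      have "degree (monom 1 n + r) \<le> n"
        using r by (intro degree_add_le) (auto simp: Pn_def degree_monom_le)
      moreover have "n \<le> degree (monom 1 n + r)" using c by (intro le_degree) simp
      ultimately have "degree (monom 1 n + r) = n" by simp
      then show "monom 1 n + r \<in> {m :: 'a poly. lead_coeff m = 1 \<and> degree m = n}" using c by simp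
      show "Dk k (monom 1 n + r) * Dp l (monom 1 n + r) = Dk k (monom 1 n + r) * Dp l (monom 1 n + r)" ..
    next
      fix m :: "'a poly" assume m: "m \<in> {m :: 'a poly. lead_coeff m = 1 \<and> degree m = n}"
      show "monom 1 n + (m - monom 1 n) = m" by simp
      have "degree (m - monom 1 n) \<le> n"
        using m by (intro degree_diff_le) (auto simp: degree_monom_le)
      moreover have "coeff (m - monom 1 n) n = 0" using m by auto
      ultimately show "m - monom 1 n \<in> Pn n" by (rule deg_le_coeff0)
    qed
    then show ?thesis using small[OF k, of "monom 1 n"] by simp
  qed
  show ?thesis using part1 part2 PnE by simp
qed

end
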